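(* Let $k\ge 2$ and let $G_1,\dots,G_k$ be vertex-disjoint graphs, $G_i$ of order $n_i\ge 3$, such that $G_1$ and $G_k$ each have at least one vertex of degree $n_i-1$ (adjacent to all other vertices of $G_i$), and each $G_i$ with $2\le i\le k-1$ has at least two vertices of degree $n_i-1$. Let $S(G_1,\dots,G_k)$ be the graph obtained from the disjoint union $G_1\cup\cdots\cup G_k$ by adding, for each $2\le i\le k$, one edge $e_i$ joining a vertex of degree $n_{i-1}-1$ in $G_{i-1}$ to a vertex of degree $n_i-1$ in $G_i$. Then $$D(S(G_1,\dots,G_k),x)=\prod_{i=1}^k D(G_i,x).$$ In particular, if $G_i=K_{n_i}$ with $n_i\ge 3$ for all $i$, then $D(S(K_{n_1},\dots,K_{n_k}),x)=\prod_{i=1}^k\big((1+x)^{n_i}-1\big)$.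
   Context: All graphs are finite and simple. For a graph $G$, a set $S\subseteq V(G)$ is dominating if every vertex of $V(G)\setminus S$ is adjacent to some vertex of $S$. Let $d(G,i)$ be the number of dominating sets of $G$ of cardinality $i$; the domination polynomial is $D(G,x)=\sum_{i=1}^{|V(G)|} d(G,i)x^i$. *)

theory Defs
  imports "HOL-Computational_Algebra.Polynomial"
begin

definition graph :: "'a set \<Rightarrow> 'a set set \<Rightarrow> bool" where
  "graph V E \<longleftrightarrow> finite V \<and> (\<forall>e\<in>E. e \<subseteq> V \<and> card e = 2)"

definition vdegree :: "'a set \<Rightarrow> 'a set set \<Rightarrow> 'a \<Rightarrow> nat" where
  "vdegree V E v = card {u \<in> V. {u, v} \<in> E}"

definition dominating :: "'a set \<Rightarrow> 'a set set \<Rightarrow> 'a set \<Rightarrow> bool" where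
  "dominating V E S \<longleftrightarrow> S \<subseteq> V \<and> (\<forall>v \<in> V - S. \<exists>u \<in> S. {u, v} \<in> E)"

definition dom_count :: "'a set \<Rightarrow> 'a set set \<Rightarrow> nat \<Rightarrow> nat" where
  "dom_count V E i = card {S. dominating V E S \<and> card S = i}"

definition dom_poly :: "'a set \<Rightarrow> 'a set set \<Rightarrow> int poly" where
  "dom_poly V E = (\<Sum>i = 1..card V. monom (int (dom_count V E i)) i)"

definition complete_edges :: "'a set \<Rightarrow> 'a set set" where
  "complete_edges V = {e. e \<subseteq> V \<and> card e = 2}"

text \<open>The graph S(G_1,...,G_k): vertices of the union, edges of the union plus
  the edges e_i = {a i, b i} for 2 <= i <= k, with a i in G_(i-1) and b i in G_i.\<close>
definition chain_vertices :: "nat \<Rightarrow> (nat \<Rightarrow> 'a set) \<Rightarrow> 'a set" where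
  "chain_vertices k V = (\<Union>i\<in>{1..k}. V i)"

definition chain_edges :: "nat \<Rightarrow> (nat \<Rightarrow> 'a set set) \<Rightarrow> (nat \<Rightarrow> 'a) \<Rightarrow> (nat \<Rightarrow> 'a) \<Rightarrow> 'a set set" where
  "chain_edges k E a b = (\<Union>i\<in>{1..k}. E i) \<union> (\<lambda>i. {a i, b i}) ` {2..k}"

end

theory Submission imports Defs "HOL-Library.FuncSet" begin

abbreviation XX :: "int poly" where "XX \<equiv> [:0,1:]"

lemma dom_fin: "finite V \<Longrightarrow> finite {S. dominating V E S}"
  unfolding dominating_def
  by (rule finite_subset[of _ "Pow V"]) auto

lemma dp_alt:
  assumes fV: "finite V" and ne: "V \<noteq> {}"
  shows "dom_poly V E = (\<Sum>S\<in>{S. dominating V E S}. XX ^ card S)"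
proof -
  let ?D = "{S. dominating V E S}"
  have fD: "finite ?D" by (rule dom_fin[OF fV])
  have img: "card ` ?D \<subseteq> {0..card V}"
    using fV by (auto simp: dominating_def intro: card_mono)
  have "(\<Sum>S\<in>?D. XX ^ card S) = (\<Sum>i\<in>{0..card V}. \<Sum>S\<in>{S. S \<in> ?D \<and> card S = i}. XX ^ card S)"
    by (rule sum.group[OF fD _ img, symmetric]) simp
  also have "\<dots> = (\<Sum>i\<in>{0..card V}. monom (int (dom_count V E i)) i)"
  proof (rule sum.cong[OF refl])
    fix i
    have "(\<Sum>S\<in>{S. S \<in> ?D \<and> card S = i}. XX ^ card S) = (\<Sum>S\<in>{S. S \<in> ?D \<and> card S = i}. XX ^ i)"
      by (rule sum.cong) auto
    also have "\<dots> = of_nat (dom_count V E i) * XX ^ i"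
      by (simp add: dom_count_def)
    also have "\<dots> = monom (int (dom_count V E i)) i"
      by (simp add: monom_altdef of_nat_poly)
    finally show "(\<Sum>S\<in>{S. S \<in> ?D \<and> card S = i}. XX ^ card S) = monom (int (dom_count V E i)) i" .
  qed
  also have "\<dots> = monom (int (dom_count V E 0)) 0 + (\<Sum>i\<in>{1..card V}. monom (int (dom_count V E i)) i)"
    by (simp add: sum.atLeast_Suc_atMost)
  also have "dom_count V E 0 = 0"
  proof -
    have "{S. dominating V E S \<and> card S = 0} = {}"
    proof (rule ccontr)
      assume "{S. dominating V E S \<and> card S = 0} \<noteq> {}"
      then obtain S where d: "dominating V E S" and c: "card S = 0" by auto
      have "finite S" using d fV by (auto simp: dominating_def intro: finite_subset)
      with c have "S = {}" by simp
      with d ne show False by (auto simp: dominating_def)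
    qed
    thus ?thesis unfolding dom_count_def by (simp only: card.empty)
  qed
  finally have "(\<Sum>S\<in>?D. XX ^ card S) = dom_poly V E" by (simp add: dom_poly_def)
  thus ?thesis by simp
qed

lemma universal:
  assumes g: "graph V E" and v: "v \<in> V" and d: "vdegree V E v = card V - 1"
    and w: "w \<in> V" "w \<noteq> v"
  shows "{w, v} \<in> E"
proof -
  have fV: "finite V" using g by (simp add: graph_def)
  have sub: "{u \<in> V. {u, v} \<in> E} \<subseteq> V - {v}"
    using g by (auto simp: graph_def)
  have "card {u \<in> V. {u, v} \<in> E} = card (V - {v})"
    using d v fV by (simp add: vdegree_def)
  hence "{u \<in> V. {u, v} \<in> E} = V - {v}"
    using card_subset_eq[OF _ sub] fV by auto
  thus ?thesis using w by auto
qed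

lemma complete_poly:
  assumes f: "finite V" and ne: "V \<noteq> {}"
  shows "dom_poly V (complete_edges V) = [:1,1:] ^ card V - 1"
proof -
  have g: "graph V (complete_edges V)" using f by (auto simp: graph_def complete_edges_def)
  have D: "{S. dominating V (complete_edges V) S} = Pow V - {{}}"
  proof (rule set_eqI, rule iffI)
    fix S assume "S \<in> {S. dominating V (complete_edges V) S}"
    thus "S \<in> Pow V - {{}}" using ne by (auto simp: dominating_def)
  next
    fix S assume "S \<in> Pow V - {{}}"
    hence S: "S \<subseteq> V" "S \<noteq> {}" by auto
    have "dominating V (complete_edges V) S"
      unfolding dominating_def complete_edges_def
    proof (intro conjI ballI S(1))
      fix v assume v: "v \<in> V - S"
      obtain u where "u \<in> S" using S by auto
      with v S show "\<exists>u\<in>S. {u, v} \<in> {e. e \<subseteq> V \<and> card e = 2}"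
        by (intro bexI[of _ u]) (auto simp: card_insert_if)
    qed
    thus "S \<in> {S. dominating V (complete_edges V) S}" by simp
  qed
  have "(\<Sum>S\<in>Pow V. XX ^ card S) = (\<Prod>x\<in>V. XX + 1)"
    using prod_add[OF f, of "\<lambda>_. XX" "\<lambda>_. 1"] f
    by (auto intro!: sum.cong simp: finite_subset)
  also have "\<dots> = [:1,1:] ^ card V" by (simp add: one_pCons)
  finally have P: "(\<Sum>S\<in>Pow V. XX ^ card S) = [:1,1:] ^ card V" .
  have "(\<Sum>S\<in>Pow V. XX ^ card S) = XX ^ card {} + (\<Sum>S\<in>Pow V - {{}}. XX ^ card S)"
    using f by (subst sum.remove[of _ "{}"]) auto
  with P have "(\<Sum>S\<in>Pow V - {{}}. XX ^ card S) = [:1,1:] ^ card V - 1" by simp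
  thus ?thesis using dp_alt[OF f ne] D by simp
qed

theorem mainTheorem7:
  fixes k :: nat and V :: "nat \<Rightarrow> 'a set" and E :: "nat \<Rightarrow> 'a set set"
    and a b :: "nat \<Rightarrow> 'a"
  assumes "k \<ge> 2"
    and "\<And>i. i \<in> {1..k} \<Longrightarrow> graph (V i) (E i)"
    and "\<And>i j. i \<in> {1..k} \<Longrightarrow> j \<in> {1..k} \<Longrightarrow> i \<noteq> j \<Longrightarrow> V i \<inter> V j = {}"
    and "\<And>i. i \<in> {1..k} \<Longrightarrow> card (V i) \<ge> 3"
    and "\<exists>v \<in> V 1. vdegree (V 1) (E 1) v = card (V 1) - 1"
    and "\<exists>v \<in> V k. vdegree (V k) (E k) v = card (V k) - 1"
    and "\<And>i. i \<in> {2..k-1} \<Longrightarrow>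
           \<exists>u \<in> V i. \<exists>v \<in> V i. u \<noteq> v \<and>
              vdegree (V i) (E i) u = card (V i) - 1 \<and> vdegree (V i) (E i) v = card (V i) - 1"
    and "\<And>i. i \<in> {2..k} \<Longrightarrow> a i \<in> V (i - 1) \<and> vdegree (V (i - 1)) (E (i - 1)) (a i) = card (V (i - 1)) - 1"
    and "\<And>i. i \<in> {2..k} \<Longrightarrow> b i \<in> V i \<and> vdegree (V i) (E i) (b i) = card (V i) - 1"
  shows "dom_poly (chain_vertices k V) (chain_edges k E a b) = (\<Prod>i = 1..k. dom_poly (V i) (E i))
    \<and> ((\<forall>i \<in> {1..k}. E i = complete_edges (V i)) \<longrightarrow>
         dom_poly (chain_vertices k V) (chain_edges k E a b) = (\<Prod>i = 1..k. [:1, 1:] ^ card (V i) - 1))"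
proof -
  note gr = assms(2) and dj = assms(3) and c3 = assms(4) and ha = assms(8) and hb = assms(9)
  define I where "I = {1..k::nat}"
  define CV where "CV = chain_vertices k V"
  define CE where "CE = chain_edges k E a b"
  have CV: "CV = (\<Union>i\<in>I. V i)" by (simp add: CV_def I_def chain_vertices_def)
  have CE: "CE = (\<Union>i\<in>I. E i) \<union> (\<lambda>i. {a i, b i}) ` {2..k}" by (simp add: CE_def I_def chain_edges_def)
  have fI: "finite I" by (simp add: I_def)
  have fin: "finite (V i)" if "i \<in> I" for i using gr that by (simp add: graph_def I_def)
  have ne: "V i \<noteq> {}" if "i \<in> I" for i using c3[of i] that by (auto simp: I_def)
  have same: "i = j" if "x \<in> V i" "x \<in> V j" "i \<in> I" "j \<in> I" for x i j
    using dj[of i j] that by (auto simp: I_def)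
  have esub: "e \<subseteq> V i" if "e \<in> E i" "i \<in> I" for e i using gr[of i] that by (auto simp: graph_def I_def)
  have fCV: "finite CV" using fI fin by (simp add: CV)
  have ecase: "(u \<in> V i \<and> {u, v} \<in> E i) \<or> (\<exists>j\<in>{2..k}. (v = a j \<and> j - 1 = i) \<or> (v = b j \<and> j = i))"
    if i: "i \<in> I" and v: "v \<in> V i" and e: "{u, v} \<in> CE" for u v i
  proof -
    from e consider (A) j where "j \<in> I" "{u, v} \<in> E j" | (B) j where "j \<in> {2..k}" "{u, v} = {a j, b j}"
      unfolding CE by blast
    thus ?thesis
    proof cases
      case A
      hence "u \<in> V j" "v \<in> V j" using esub by auto
      with v i A have "j = i" using same by blast
      with A \<open>u \<in> V j\<close> show ?thesis by auto
    next
      case B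
      hence "v = a j \<or> v = b j" by (auto simp: doubleton_eq_iff)
      thus ?thesis
      proof
        assume va: "v = a j"
        have "a j \<in> V (j - 1)" "j - 1 \<in> I" using ha[of j] B by (auto simp: I_def)
        hence "j - 1 = i" using same[of v "j - 1" i] va v i by auto
        thus ?thesis using va B by blast
      next
        assume vb: "v = b j"
        have "b j \<in> V j" "j \<in> I" using hb[of j] B by (auto simp: I_def)
        hence "j = i" using same[of v j i] vb v i by auto
        thus ?thesis using vb B by blast
      qed
    qed
  qed
  have univ: "{w, v} \<in> E i" if "i \<in> I" "v \<in> V i" "w \<in> V i" "w \<noteq> v"
    "j \<in> {2..k}" "(v = a j \<and> j - 1 = i) \<or> (v = b j \<and> j = i)" for i v w j
  proof -
    have "vdegree (V i) (E i) v = card (V i) - 1"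
      using that ha[of j] hb[of j] by auto
    thus ?thesis using universal[of "V i" "E i" v w] gr that by (auto simp: I_def)
  qed
  have key: "dominating CV CE S \<longleftrightarrow> (\<forall>i\<in>I. dominating (V i) (E i) (S \<inter> V i))"
    if S: "S \<subseteq> CV" for S
  proof
    assume d: "dominating CV CE S"
    show "\<forall>i\<in>I. dominating (V i) (E i) (S \<inter> V i)"
    proof
      fix i assume i: "i \<in> I"
      have nonempty: "S \<inter> V i \<noteq> {}"
      proof
        assume emp: "S \<inter> V i = {}"
        have "V i \<subseteq> {a (i + 1), b i}"
        proof
          fix v assume v: "v \<in> V i"
          hence "v \<in> CV - S" using emp i CV by auto
          then obtain u where u: "u \<in> S" "{u, v} \<in> CE" using d by (auto simp: dominating_def)
          from ecase[OF i v u(2)] emp u(1) obtain j where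
            "j \<in> {2..k}" "(v = a j \<and> j - 1 = i) \<or> (v = b j \<and> j = i)" by blast
          thus "v \<in> {a (i + 1), b i}" by auto
        qed
        hence "card (V i) \<le> card {a (i + 1), b i}" by (rule card_mono[rotated]) simp
        also have "\<dots> \<le> 2" by (simp add: card_insert_if)
        finally show False using c3[of i] i by (auto simp: I_def)
      qed
      then obtain w where w: "w \<in> S" "w \<in> V i" by auto
      show "dominating (V i) (E i) (S \<inter> V i)"
        unfolding dominating_def
      proof (intro conjI ballI)
        fix v assume v: "v \<in> V i - S \<inter> V i"
        hence "v \<in> CV - S" using i CV by auto
        then obtain u where u: "u \<in> S" "{u, v} \<in> CE" using d by (auto simp: dominating_def)
        from ecase[OF i _ u(2)] v
        consider "u \<in> V i \<and> {u, v} \<in> E i" | j where "j \<in> {2..k}" "(v = a j \<and> j - 1 = i) \<or> (v = b j \<and> j = i)"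
          by blast
        thus "\<exists>u\<in>S \<inter> V i. {u, v} \<in> E i"
        proof cases
          case 1 thus ?thesis using u by blast
        next
          case 2
          have "w \<noteq> v" using v w by auto
          hence "{w, v} \<in> E i" using univ[OF i _ w(2) _ 2] v by auto
          thus ?thesis using w by blast
        qed
      qed auto
    qed
  next
    assume d: "\<forall>i\<in>I. dominating (V i) (E i) (S \<inter> V i)"
    show "dominating CV CE S"
      unfolding dominating_def
    proof (intro conjI ballI S)
      fix v assume v: "v \<in> CV - S"
      then obtain i where i: "i \<in> I" "v \<in> V i" using CV by auto
      with d v obtain u where "u \<in> S \<inter> V i" "{u, v} \<in> E i" by (auto simp: dominating_def)
      thus "\<exists>u\<in>S. {u, v} \<in> CE" using i CE by blast
    qed
  qed
  define D where "D i = {S. dominating (V i) (E i) S}" for i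
  define h where "h g = (\<Union>i\<in>I. g i)" for g :: "nat \<Rightarrow> 'a set"
  have Dsub: "T \<subseteq> V i" if "T \<in> D i" for T i using that by (simp add: D_def dominating_def)
  have hint: "h g \<inter> V i = g i" if g: "g \<in> PiE I D" and i: "i \<in> I" for g i
  proof -
    have gj: "g j \<inter> V i = (if j = i then g i else {})" if j: "j \<in> I" for j
    proof -
      have "g j \<subseteq> V j" using g j Dsub by auto
      thus ?thesis using same[of _ j i] j i Dsub[of "g i" i] g by auto
    qed
    have "h g \<inter> V i = (\<Union>j\<in>I. if j = i then g i else {})"
    proof -
      have "h g \<inter> V i = (\<Union>j\<in>I. g j \<inter> V i)" by (auto simp: h_def)
      also have "\<dots> = (\<Union>j\<in>I. if j = i then g i else {})" using gj by (intro SUP_cong) auto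
      finally show ?thesis .
    qed
    also have "\<dots> = g i" using i by auto
    finally show ?thesis .
  qed
  have bij: "bij_betw h (PiE I D) {S. dominating CV CE S}"
  proof (rule bij_betw_imageI)
    show "inj_on h (PiE I D)"
    proof (rule inj_onI)
      fix g g' assume g: "g \<in> PiE I D" and g': "g' \<in> PiE I D" and e: "h g = h g'"
      show "g = g'"
      proof (rule PiE_ext[OF g g'])
        fix i assume "i \<in> I" thus "g i = g' i" using hint[OF g] hint[OF g'] e by metis
      qed
    qed
  next
    show "h ` PiE I D = {S. dominating CV CE S}"
    proof (rule set_eqI, rule iffI)
      fix S assume "S \<in> h ` PiE I D"
      then obtain g where g: "g \<in> PiE I D" and S: "S = h g" by auto
      have sub: "S \<subseteq> CV" using g Dsub S by (force simp: h_def CV)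
      have "\<forall>i\<in>I. dominating (V i) (E i) (S \<inter> V i)"
        using hint[OF g] g S by (auto simp: D_def)
      thus "S \<in> {S. dominating CV CE S}" using key[OF sub] by simp
    next
      fix S assume "S \<in> {S. dominating CV CE S}"
      hence d: "dominating CV CE S" by simp
      hence sub: "S \<subseteq> CV" by (simp add: dominating_def)
      define g where "g = restrict (\<lambda>i. S \<inter> V i) I"
      have "g \<in> PiE I D" using key[OF sub] d by (auto simp: g_def D_def)
      moreover have "h g = S" using sub by (auto simp: h_def g_def CV)
      ultimately show "S \<in> h ` PiE I D" by blast
    qed
  qed
  have CVne: "CV \<noteq> {}" using ne[of 1] assms(1) by (auto simp: CV I_def)
  have main: "dom_poly CV CE = (\<Prod>i\<in>I. dom_poly (V i) (E i))"
  proof -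
    have "dom_poly CV CE = (\<Sum>S\<in>{S. dominating CV CE S}. XX ^ card S)"
      by (rule dp_alt[OF fCV CVne])
    also have "\<dots> = (\<Sum>g\<in>PiE I D. XX ^ card (h g))"
      by (rule sum.reindex_bij_betw[OF bij, symmetric])
    also have "\<dots> = (\<Sum>g\<in>PiE I D. \<Prod>i\<in>I. XX ^ card (g i))"
    proof (rule sum.cong[OF refl])
      fix g assume g: "g \<in> PiE I D"
      have "card (h g) = (\<Sum>i\<in>I. card (g i))" unfolding h_def
      proof (rule card_UN_disjoint[OF fI])
        show "\<forall>i\<in>I. finite (g i)" using g Dsub fin by (meson PiE_mem finite_subset)
        show "\<forall>i\<in>I. \<forall>j\<in>I. i \<noteq> j \<longrightarrow> g i \<inter> g j = {}"
          using g Dsub same by (metis PiE_mem disjoint_iff subsetD)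
      qed
      thus "XX ^ card (h g) = (\<Prod>i\<in>I. XX ^ card (g i))" by (simp add: power_sum)
    qed
    also have "\<dots> = (\<Prod>i\<in>I. \<Sum>S\<in>D i. XX ^ card S)"
      by (rule prod_sum_PiE[symmetric, OF fI]) (simp add: D_def dom_fin fin)
    also have "\<dots> = (\<Prod>i\<in>I. dom_poly (V i) (E i))"
      by (rule prod.cong[OF refl]) (simp add: D_def dp_alt fin ne)
    finally show ?thesis .
  qed
  show ?thesis
  proof
    show "dom_poly (chain_vertices k V) (chain_edges k E a b) = (\<Prod>i = 1..k. dom_poly (V i) (E i))"
      using main by (simp add: CV_def CE_def I_def)
    show "(\<forall>i \<in> {1..k}. E i = complete_edges (V i)) \<longrightarrow>
         dom_poly (chain_vertices k V) (chain_edges k E a b) = (\<Prod>i = 1..k. [:1, 1:] ^ card (V i) - 1)"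
    proof
      assume c: "\<forall>i \<in> {1..k}. E i = complete_edges (V i)"
      have "(\<Prod>i\<in>I. dom_poly (V i) (E i)) = (\<Prod>i\<in>I. [:1, 1:] ^ card (V i) - 1)"
        by (rule prod.cong[OF refl]) (simp add: c[unfolded I_def[symmetric]] complete_poly fin ne)
      thus "dom_poly (chain_vertices k V) (chain_edges k E a b) = (\<Prod>i = 1..k. [:1, 1:] ^ card (V i) - 1)"
        using main by (simp add: CV_def CE_def I_def)
    qed
  qed
qed

end
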